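(* Let $\mathcal{C}$ be a finite set of classes and let $\ell_\star, \ell_1, \dots, \ell_K$ ($K \ge 1$) be $\mathcal{C}$-valued random variables on a common probability space, where $\ell_\star$ is the oracle label and $\ell_i$ is the label given by annotator $i$. Assume the annotators are positively correlated, namely $\mathbb{P}(\ell_i = \ell_\star \mid \ell_j = \ell_\star) \ge \mathbb{P}(\ell_i = \ell_\star)$ for all $i, j \in \{1, \dots, K\}$ with $\mathbb{P}(\ell_j = \ell_\star) > 0$. Then $$\frac{1}{K}\sum_{i=1}^K \mathbb{P}(\ell_i = \ell_\star) \;\le\; \mathcal{U} := \sqrt{\frac{1}{K^2}\sum_{i=1}^K\sum_{j=1}^K \mathbb{P}(\ell_i = \ell_j)}.$$
   Context: The quantity $\frac{1}{K}\sum_{i=1}^K \mathbb{P}(\ell_i = \ell_\star)$ is the oracle accuracy $\mathbb{P}(\ell_{\mathcal K} = \ell_\star)$ of the "average annotator" $\ell_{\mathcal K}$, i.e. the label obtained by choosing one of the $K$ annotators uniformly at random (independently of everything else). *)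

theory Defs
  imports "HOL-Probability.Probability"
begin

end

theory Submission
  imports Defs
begin

lemma eq_set_meas:
  assumes f: "f \<in> measurable M (count_space C)" and g: "g \<in> measurable M (count_space C)"
    and "finite C"
  shows "{\<omega> \<in> space M. f \<omega> = g \<omega>} \<in> sets M"
proof -
  have "{\<omega> \<in> space M. f \<omega> = g \<omega>} = (\<Union>c\<in>C. (f -` {c} \<inter> space M) \<inter> (g -` {c} \<inter> space M))"
    using measurable_space[OF f] measurable_space[OF g] by auto
  also have "\<dots> \<in> sets M"
    using assms by (intro sets.finite_UN) (auto intro!: measurable_sets[OF f] measurable_sets[OF g])
  finally show ?thesis .
qed

theorem theorem1:
  fixes M :: "'a measure" and C :: "'c set" and K :: nat
    and lstar :: "'a \<Rightarrow> 'c" and l :: "nat \<Rightarrow> 'a \<Rightarrow> 'c"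
  assumes "prob_space M"
    and "finite C"
    and "K \<ge> 1"
    and "lstar \<in> measurable M (count_space C)"
    and "\<And>i. i \<in> {1..K} \<Longrightarrow> l i \<in> measurable M (count_space C)"
    and "\<And>i j. i \<in> {1..K} \<Longrightarrow> j \<in> {1..K} \<Longrightarrow>
           \<P>(\<omega> in M. l j \<omega> = lstar \<omega>) > 0 \<Longrightarrow>
           \<P>(\<omega> in M. l i \<omega> = lstar \<omega> \<bar> l j \<omega> = lstar \<omega>)
             \<ge> \<P>(\<omega> in M. l i \<omega> = lstar \<omega>)"
  shows "(1 / real K) * (\<Sum>i=1..K. \<P>(\<omega> in M. l i \<omega> = lstar \<omega>))
         \<le> sqrt ((1 / (real K)^2) * (\<Sum>i=1..K. \<Sum>j=1..K. \<P>(\<omega> in M. l i \<omega> = l j \<omega>)))"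
proof -
  interpret prob_space M by fact
  define p where "p i = \<P>(\<omega> in M. l i \<omega> = lstar \<omega>)" for i
  have key: "p i * p j \<le> \<P>(\<omega> in M. l i \<omega> = l j \<omega>)" if i: "i \<in> {1..K}" and j: "j \<in> {1..K}" for i j
  proof -
    have mi: "{\<omega> \<in> space M. l i \<omega> = lstar \<omega>} \<in> sets M"
      using eq_set_meas[OF assms(5)[OF i] assms(4) assms(2)] .
    have mj: "{\<omega> \<in> space M. l j \<omega> = lstar \<omega>} \<in> sets M"
      using eq_set_meas[OF assms(5)[OF j] assms(4) assms(2)] .
    have mij: "{\<omega> \<in> space M. l i \<omega> = l j \<omega>} \<in> sets M"
      using eq_set_meas[OF assms(5)[OF i] assms(5)[OF j] assms(2)] .
    have sub: "{\<omega> \<in> space M. l i \<omega> = lstar \<omega> \<and> l j \<omega> = lstar \<omega>} \<subseteq> {\<omega> \<in> space M. l i \<omega> = l j \<omega>}"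
      by auto
    have le1: "\<P>(\<omega> in M. l i \<omega> = lstar \<omega> \<and> l j \<omega> = lstar \<omega>) \<le> \<P>(\<omega> in M. l i \<omega> = l j \<omega>)"
      by (rule finite_measure_mono[OF sub mij])
    show ?thesis
    proof (cases "p j > 0")
      case True
      have "p i \<le> \<P>(\<omega> in M. l i \<omega> = lstar \<omega> \<and> l j \<omega> = lstar \<omega>) / p j"
        using assms(6)[OF i j] True unfolding p_def cond_prob_def by simp
      then have "p i * p j \<le> \<P>(\<omega> in M. l i \<omega> = lstar \<omega> \<and> l j \<omega> = lstar \<omega>)"
        using True by (simp add: pos_le_divide_eq)
      then show ?thesis using le1 by linarith
    next
      case False
      then have "p j = 0" unfolding p_def using measure_nonneg[of M] by (metis less_eq_real_def)
      then show ?thesis by simp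
    qed
  qed
  have "(\<Sum>i=1..K. p i)^2 = (\<Sum>i=1..K. \<Sum>j=1..K. p i * p j)"
    by (simp add: power2_eq_square sum_product)
  also have "\<dots> \<le> (\<Sum>i=1..K. \<Sum>j=1..K. \<P>(\<omega> in M. l i \<omega> = l j \<omega>))"
    by (intro sum_mono key) auto
  finally have S: "(\<Sum>i=1..K. p i)^2 \<le> (\<Sum>i=1..K. \<Sum>j=1..K. \<P>(\<omega> in M. l i \<omega> = l j \<omega>))" .
  have Kpos: "real K > 0" using assms(3) by simp
  have "((1 / real K) * (\<Sum>i=1..K. p i))^2 = (1 / (real K)^2) * (\<Sum>i=1..K. p i)^2"
    by (simp add: power_mult_distrib power_divide)
  also have "\<dots> \<le> (1 / (real K)^2) * (\<Sum>i=1..K. \<Sum>j=1..K. \<P>(\<omega> in M. l i \<omega> = l j \<omega>))"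
    using S Kpos by (intro mult_left_mono) auto
  finally have "(1 / real K) * (\<Sum>i=1..K. p i) \<le> sqrt ((1 / (real K)^2) * (\<Sum>i=1..K. \<Sum>j=1..K. \<P>(\<omega> in M. l i \<omega> = l j \<omega>)))"
    using real_le_rsqrt by blast
  then show ?thesis unfolding p_def .
qed

end
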